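(* Let $\mu$ be a stationary ergodic process on $[0,1]^{\mathbb N}$. For every $m\in\mathbb N$, \[\lim_{n,\ell\to\infty}\beta_n^{\ell}(m)=\beta(m).\]
   Context: $X_t$ is the $t$-th coordinate projection on $[0,1]^{\mathbb N}$ with product Borel $\sigma$-algebra. For $\sigma$-subalgebras $\mathfrak U,\mathfrak V$: with $\mu_\otimes$ the pushforward of $\mu$ under $\omega\mapsto(\omega,\omega)$ on $\mathfrak U\otimes\mathfrak V$ and $\mu_{\mathfrak U},\mu_{\mathfrak V}$ the restrictions of $\mu$, $\beta(\mathfrak U,\mathfrak V):=\sup_{W\in\mathfrak U\otimes\mathfrak V}|\mu_\otimes(W)-(\mu_{\mathfrak U}\times\mu_{\mathfrak V})(W)|$. The $\beta$-mixing coefficients are $\beta(m):=\sup_{j\in\mathbb N}\beta\big(\sigma(X_1,\dots,X_j),\sigma(X_t:t\ge j+m)\big)$. Dyadic cubes: $I_{\ell,i}=[i2^{-\ell},(i+1)2^{-\ell})$, $i=0,\dots,2^\ell-1$ (last interval closed); $\Delta_{k,\ell}$ the set of cubes $I_{\ell,i_1}\times\cdots\times I_{\ell,i_k}$. For $n>m$, $j\in\{1,\dots,n-m\}$, $j':=n-m-j+1$: $\beta_{n,j}^{\ell}(m):=\frac12\sum_{A\in\Delta_{j,\ell}}\sum_{B\in\Delta_{j',\ell}}|\mu((X_1,\dots,X_j)\in A,(X_{j+m},\dots,X_n)\in B)-\mu((X_1,\dots,X_j)\in A)\mu((X_{j+m},\dots,X_n)\in B)|$, and $\beta_n^{\ell}(m):=\max_{j\in\{1,\dots,n-m\}}\beta_{n,j}^{\ell}(m)$.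 The limit is the joint limit in $n$ and $\ell$. *)

theory Defs
  imports "HOL-Probability.Probability"
begin

text \<open>Coordinate k of
  an element of type nat => real stores the value of X_(k+1), so that the
  paper's indexing X_1, X_2, ... (N = {1,2,...}) is kept.\<close>

definition Omega :: "(nat \<Rightarrow> real) measure" where
  "Omega = PiM UNIV (\<lambda>_. restrict_space borel {0..1::real})"

definition X :: "nat \<Rightarrow> (nat \<Rightarrow> real) \<Rightarrow> real" where
  "X t \<omega> = \<omega> (t - 1)"

definition shift :: "(nat \<Rightarrow> real) \<Rightarrow> (nat \<Rightarrow> real)" where
  "shift \<omega> = (\<lambda>k. \<omega> (Suc k))"

definition stationary :: "(nat \<Rightarrow> real) measure \<Rightarrow> bool" where
  "stationary \<mu> \<longleftrightarrow> distr \<mu> \<mu> shift = \<mu>"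

definition ergodic :: "(nat \<Rightarrow> real) measure \<Rightarrow> bool" where
  "ergodic \<mu> \<longleftrightarrow> (\<forall>A \<in> sets \<mu>. shift -` A \<inter> space \<mu> = A \<longrightarrow> measure \<mu> A = 0 \<or> measure \<mu> A = 1)"

definition gen_sigma :: "nat set \<Rightarrow> (nat \<Rightarrow> real) set set" where
  "gen_sigma T = sigma_sets (space Omega)
     {X t -` B \<inter> space Omega | t B. t \<in> T \<and> B \<in> sets (borel :: real measure)}"

definition restr :: "'a measure \<Rightarrow> 'a set set \<Rightarrow> 'a measure" where
  "restr \<mu> U = measure_of (space \<mu>) U (emeasure \<mu>)"

definition beta_alg :: "'a measure \<Rightarrow> 'a set set \<Rightarrow> 'a set set \<Rightarrow> real" where
  "beta_alg \<mu> U V =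
     (SUP W \<in> sets (restr \<mu> U \<Otimes>\<^sub>M restr \<mu> V).
        \<bar>measure (distr \<mu> (restr \<mu> U \<Otimes>\<^sub>M restr \<mu> V) (\<lambda>\<omega>. (\<omega>, \<omega>))) W
          - measure (restr \<mu> U \<Otimes>\<^sub>M restr \<mu> V) W\<bar>)"

definition beta_mix :: "(nat \<Rightarrow> real) measure \<Rightarrow> nat \<Rightarrow> real" where
  "beta_mix \<mu> m = (SUP j \<in> {1..}. beta_alg \<mu> (gen_sigma {1..j}) (gen_sigma {j+m..}))"

definition dyadic :: "nat \<Rightarrow> nat \<Rightarrow> real set" where
  "dyadic l i = (if i = 2^l - 1 then {real i / 2^l .. (real i + 1) / 2^l}
                 else {real i / 2^l ..< (real i + 1) / 2^l})"

definition cube_idx :: "nat \<Rightarrow> nat \<Rightarrow> (nat \<Rightarrow> nat) set" where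
  "cube_idx k l = {0..<k} \<rightarrow>\<^sub>E {0..<2^l}"

definition cube_event :: "nat \<Rightarrow> nat \<Rightarrow> nat \<Rightarrow> (nat \<Rightarrow> nat) \<Rightarrow> (nat \<Rightarrow> real) set" where
  "cube_event s k l a = {\<omega> \<in> space Omega. \<forall>r < k. X (s + r) \<omega> \<in> dyadic l (a r)}"

definition beta_nlj :: "(nat \<Rightarrow> real) measure \<Rightarrow> nat \<Rightarrow> nat \<Rightarrow> nat \<Rightarrow> nat \<Rightarrow> real" where
  "beta_nlj \<mu> n l m j = (let j' = n - m - j + 1 in
     (1/2) * (\<Sum>a \<in> cube_idx j l. \<Sum>b \<in> cube_idx j' l.
        \<bar>measure \<mu> (cube_event 1 j l a \<inter> cube_event (j + m) j' l b)
          - measure \<mu> (cube_event 1 j l a) * measure \<mu> (cube_event (j + m) j' l b)\<bar>))"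

definition beta_nl :: "(nat \<Rightarrow> real) measure \<Rightarrow> nat \<Rightarrow> nat \<Rightarrow> nat \<Rightarrow> real" where
  "beta_nl \<mu> n l m = Max ((\<lambda>j. beta_nlj \<mu> n l m j) ` {1..n - m})"

end

theory Submission
  imports Defs
begin



lemma dyadic_bounds:
  assumes "x \<in> dyadic l i"
  shows "real i / 2^l \<le> x" "x \<le> (real i + 1) / 2^l"
  using assms by (auto simp: dyadic_def split: if_splits)

lemma dyadic_lt:
  assumes "x \<in> dyadic l i" "i + 1 < 2^l"
  shows "x < (real i + 1) / 2^l"
  using assms by (auto simp: dyadic_def split: if_splits)

lemma dyadic_disj:
  assumes "i < 2^l" "i' < 2^l" "x \<in> dyadic l i" "x \<in> dyadic l i'"
  shows "i = i'"
proof (rule ccontr)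
  assume ne: "i \<noteq> i'"
  have key: "False" if "a < b" "b < 2^l" "x \<in> dyadic l a" "x \<in> dyadic l b" for a b
  proof -
    have "a + 1 < 2^l" using that by linarith
    then have "x < (real a + 1) / 2^l" using dyadic_lt that by blast
    moreover have "real b / 2^l \<le> x" using dyadic_bounds that by blast
    moreover have "(real a + 1) / 2^l \<le> real b / 2^l"
      using that by (simp add: divide_right_mono)
    ultimately show False by linarith
  qed
  show False
  proof (cases "i < i'")
    case True then show ?thesis using key assms by blast
  next
    case False then have "i' < i" using ne by linarith
    then show ?thesis using key assms by blast
  qed
qed

lemma dyadic_cover:
  assumes "0 \<le> x" "x \<le> (1::real)"
  shows "\<exists>i<2^l. x \<in> dyadic l i"
proof (cases "x = 1")
  case True
  have "(2::real)^l \<ge> 1" by simp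
  have "x \<in> dyadic l (2^l - 1)"
    using True by (auto simp: dyadic_def of_nat_diff field_simps)
  then show ?thesis by (intro exI[of _ "2^l - 1"]) auto
next
  case False
  then have x1: "x < 1" using assms by simp
  define i where "i = nat \<lfloor>x * 2^l\<rfloor>"
  have p: "(0::real) < 2^l" by simp
  have fl: "real_of_int \<lfloor>x * 2^l\<rfloor> \<le> x * 2^l" "x * 2^l < real_of_int \<lfloor>x * 2^l\<rfloor> + 1"
    by linarith+
  have fl0: "0 \<le> \<lfloor>x * 2^l\<rfloor>" using assms by simp
  have ri: "real i = real_of_int \<lfloor>x * 2^l\<rfloor>" using fl0 i_def by simp
  have "x * 2^l < 2^l" using x1 p by simp
  then have "real i < 2^l" using ri fl by linarith
  then have ilt: "i < 2^l"
    by (metis of_nat_less_iff of_nat_numeral of_nat_power)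
  have a: "real i / 2^l \<le> x" using ri fl p by (simp add: divide_le_eq)
  have b: "x < (real i + 1) / 2^l" using ri fl p by (simp add: less_divide_eq)
  have "x \<in> dyadic l i" using a b by (auto simp: dyadic_def)
  then show ?thesis using ilt by blast
qed

lemma dyadic_nest:
  assumes "l \<le> l'" "i < 2^l'"
  shows "dyadic l' i \<subseteq> dyadic l (i div 2^(l'-l))" "i div 2^(l'-l) < 2^l"
proof -
  define d where "d = l' - l"
  define q where "q = i div 2^d"
  have l': "l' = l + d" using assms d_def by simp
  have pw: "(2::nat)^l' = 2^l * 2^d" using l' by (simp add: power_add)
  have q1: "q * 2^d \<le> i" unfolding q_def by (simp add: div_times_less_eq_dividend)
  have q2: "i + 1 \<le> (q+1) * 2^d"
  proof -
    have e: "i = q * 2^d + i mod 2^d" unfolding q_def by (metis div_mult_mod_eq)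
    have "i mod 2^d < 2^d" by simp
    then have "i < q * 2^d + 2^d" using e by linarith
    then show ?thesis by (simp add: algebra_simps)
  qed
  have qlt: "q < 2^l"
  proof -
    have "q * 2^d < 2^l * 2^d" using q1 assms(2) pw by linarith
    then show ?thesis by simp
  qed
  show "i div 2^(l'-l) < 2^l" using qlt q_def d_def by simp
  have R1: "real q / 2^l \<le> real i / 2^l'"
  proof -
    have "real (q * 2^d) \<le> real i" using q1 by (simp only: of_nat_le_iff)
    then have "real q * 2^d \<le> real i" by simp
    then have "real q \<le> real i / 2^d" by (simp add: pos_le_divide_eq)
    then have "real q / 2^l \<le> real i / 2^d / 2^l" by (intro divide_right_mono) auto
    moreover have "real i / 2^l' = real i / 2^d / 2^l" using l' by (simp add: power_add)
    ultimately show ?thesis by linarith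
  qed
  have R2: "(real i + 1) / 2^l' \<le> (real q + 1) / 2^l"
  proof -
    have "real (i + 1) \<le> real ((q+1) * 2^d)" using q2 by (simp only: of_nat_le_iff)
    then have "real i + 1 \<le> (real q + 1) * 2^d" by (simp add: algebra_simps)
    then have "(real i + 1) / 2^d \<le> real q + 1" by (simp add: pos_divide_le_eq)
    then have "(real i + 1) / 2^d / 2^l \<le> (real q + 1) / 2^l" by (intro divide_right_mono) auto
    moreover have "(real i + 1) / 2^l' = (real i + 1) / 2^d / 2^l" using l' by (simp add: power_add)
    ultimately show ?thesis by linarith
  qed
  show "dyadic l' i \<subseteq> dyadic l (i div 2^(l'-l))"
  proof
    fix y assume y: "y \<in> dyadic l' i"
    have y1: "real q / 2^l \<le> y" using dyadic_bounds(1)[OF y] R1 by linarith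
    have y2: "y \<le> (real q + 1) / 2^l" using dyadic_bounds(2)[OF y] R2 by linarith
    show "y \<in> dyadic l (i div 2^(l'-l))"
    proof (cases "q = 2^l - 1")
      case True then show ?thesis using y1 y2 by (simp add: dyadic_def q_def d_def)
    next
      case False
      then have "q + 1 < 2^l" using qlt by linarith
      then have "(q+1) * 2^d < 2^l * 2^d" by (intro mult_strict_right_mono) auto
      then have "i + 1 < 2^l'" using q2 pw by linarith
      then have "y < (real i + 1) / 2^l'" using dyadic_lt y by blast
      then have "y < (real q + 1) / 2^l" using R2 by linarith
      then show ?thesis using y1 False by (simp add: dyadic_def q_def d_def)
    qed
  qed
qed




lemma space_Omega: "space Omega = {\<omega>. \<forall>k. \<omega> k \<in> {0..1}}"
  by (auto simp: Omega_def space_PiM space_restrict_space PiE_def Pi_def)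

lemma X_range: "\<omega> \<in> space Omega \<Longrightarrow> 0 \<le> X t \<omega> \<and> X t \<omega> \<le> 1"
  by (auto simp: space_Omega X_def)

lemma X_meas: "X t \<in> Omega \<rightarrow>\<^sub>M borel"
proof -
  have "(\<lambda>\<omega>. \<omega> (t - 1)) \<in> Omega \<rightarrow>\<^sub>M restrict_space borel {0..1::real}"
    unfolding Omega_def by (rule measurable_component_singleton) simp
  moreover have "(\<lambda>x. x) \<in> restrict_space borel {0..1::real} \<rightarrow>\<^sub>M borel"
    by (rule measurable_restrict_space1) simp
  ultimately have "(\<lambda>\<omega>. \<omega> (t - 1)) \<in> Omega \<rightarrow>\<^sub>M borel"
    using measurable_compose by fastforce
  then show ?thesis unfolding X_def[abs_def] .
qed

lemma X_sets: "B \<in> sets borel \<Longrightarrow> X t -` B \<inter> space Omega \<in> sets Omega"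
  using X_meas measurable_sets by blast

lemma gen_Pow: "{X t -` B \<inter> space Omega | t B. t \<in> T \<and> B \<in> sets (borel :: real measure)} \<subseteq> Pow (space Omega)"
  by auto

lemma gen_sigma_sub: "gen_sigma T \<subseteq> sets Omega"
  unfolding gen_sigma_def by (rule sets.sigma_sets_subset) (auto intro: X_sets)

lemma gen_sigma_sigma: "sigma_sets (space Omega) (gen_sigma T) = gen_sigma T"
  unfolding gen_sigma_def by (rule sigma_sets_sigma_sets_eq[OF gen_Pow])

lemma gen_sigma_Pow: "gen_sigma T \<subseteq> Pow (space Omega)"
  using gen_sigma_sub sets.sets_into_space by blast

lemma gen_sigma_basic: "t \<in> T \<Longrightarrow> B \<in> sets borel \<Longrightarrow> X t -` B \<inter> space Omega \<in> gen_sigma T"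
  unfolding gen_sigma_def by (rule sigma_sets.Basic) blast

lemma dyadic_borel: "dyadic l i \<in> sets borel"
  by (auto simp: dyadic_def)

lemma cube_event_Suc:
  "cube_event s (Suc k) l a = cube_event s k l a \<inter> (X (s + k) -` dyadic l (a k) \<inter> space Omega)"
  by (auto simp: cube_event_def less_Suc_eq)

lemma cube_event_in:
  assumes "\<And>r. r < k \<Longrightarrow> s + r \<in> T"
  shows "cube_event s k l a \<in> gen_sigma T"
  using assms
proof (induction k)
  case 0
  have "cube_event s 0 l a = space Omega" by (auto simp: cube_event_def)
  then show ?case unfolding gen_sigma_def by (simp add: sigma_sets_top)
next
  case (Suc k)
  interpret sigma_algebra "space Omega" "gen_sigma T"
    unfolding gen_sigma_def by (rule sigma_algebra_sigma_sets[OF gen_Pow])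
  have "cube_event s k l a \<in> gen_sigma T" using Suc by simp
  moreover have "X (s + k) -` dyadic l (a k) \<inter> space Omega \<in> gen_sigma T"
    using Suc.prems dyadic_borel by (intro gen_sigma_basic) auto
  ultimately show ?case unfolding cube_event_Suc by blast
qed

lemma cube_event_sub: "cube_event s k l a \<subseteq> space Omega"
  by (auto simp: cube_event_def)

lemma cube_event_cover:
  assumes "\<omega> \<in> space Omega"
  shows "\<exists>a \<in> cube_idx k l. \<omega> \<in> cube_event s k l a"
proof -
  have "\<forall>r. \<exists>i<2^l. X (s + r) \<omega> \<in> dyadic l i"
    using dyadic_cover X_range[OF assms] by blast
  then obtain f where f: "\<And>r. f r < 2^l \<and> X (s + r) \<omega> \<in> dyadic l (f r)" by metis
  define a where "a = restrict f {0..<k}"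
  have "a \<in> cube_idx k l" using f by (auto simp: a_def cube_idx_def)
  moreover have "\<omega> \<in> cube_event s k l a" using f assms by (auto simp: a_def cube_event_def)
  ultimately show ?thesis by blast
qed

lemma cube_event_disj:
  assumes "a \<in> cube_idx k l" "a' \<in> cube_idx k l" "a \<noteq> a'"
  shows "cube_event s k l a \<inter> cube_event s k l a' = {}"
proof -
  obtain r where r: "a r \<noteq> a' r" using assms(3) by blast
  have rk: "r < k" using r assms(1,2) unfolding cube_idx_def by (metis PiE_arb atLeastLessThan_iff zero_le)
  have lt: "a r < 2^l" "a' r < 2^l" using rk assms(1,2) by (auto simp: cube_idx_def)
  show ?thesis using dyadic_disj[OF lt] r rk by (auto simp: cube_event_def)
qed

lemma cube_event_nest:
  assumes "k \<le> k'" "l \<le> l'" "a' \<in> cube_idx k' l'"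
  shows "\<exists>a \<in> cube_idx k l. cube_event s k' l' a' \<subseteq> cube_event s k l a"
proof -
  define a where "a = restrict (\<lambda>r. a' r div 2^(l'-l)) {0..<k}"
  have lt: "\<And>r. r < k' \<Longrightarrow> a' r < 2^l'" using assms(3) by (auto simp: cube_idx_def)
  have "a \<in> cube_idx k l" using dyadic_nest(2)[OF assms(2) lt] assms(1) by (auto simp: a_def cube_idx_def)
  moreover have "cube_event s k' l' a' \<subseteq> cube_event s k l a"
  proof
    fix \<omega> assume w: "\<omega> \<in> cube_event s k' l' a'"
    have "\<And>r. r < k \<Longrightarrow> X (s + r) \<omega> \<in> dyadic l (a r)"
    proof -
      fix r assume "r < k"
      then have rk: "r < k'" using assms(1) by simp
      then have "X (s + r) \<omega> \<in> dyadic l' (a' r)" using w by (auto simp: cube_event_def)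
      then show "X (s + r) \<omega> \<in> dyadic l (a r)" using dyadic_nest(1)[OF assms(2) lt[OF rk]] \<open>r < k\<close>
        by (auto simp: a_def)
    qed
    then show "\<omega> \<in> cube_event s k l a" using w by (auto simp: cube_event_def)
  qed
  ultimately show ?thesis by blast
qed

lemma finite_cube_idx: "finite (cube_idx k l)"
  by (auto simp: cube_idx_def intro!: finite_PiE)




locale bsetup =
  fixes \<mu> :: "(nat \<Rightarrow> real) measure" and j m :: nat
  assumes P: "prob_space \<mu>" and S: "sets \<mu> = sets Omega"
begin

definition "U = gen_sigma {1..j}"
definition "V = gen_sigma {j+m..}"
definition "UM = restr \<mu> U"
definition "VM = restr \<mu> V"
definition "PM = UM \<Otimes>\<^sub>M VM"
definition "M1 = distr \<mu> PM (\<lambda>\<omega>. (\<omega>, \<omega>))"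
definition "nu W = measure M1 W - measure PM W"

lemma spc: "space \<mu> = space Omega"
  using S sets_eq_imp_space_eq by blast

lemma restr_eq:
  "restr \<mu> (gen_sigma T) = restr_to_subalg \<mu> (sigma (space Omega) (gen_sigma T))"
  unfolding restr_def restr_to_subalg_def using gen_sigma_Pow[of T]
  by (simp add: gen_sigma_sigma spc)

lemma subalg: "subalgebra \<mu> (sigma (space Omega) (gen_sigma T))"
  unfolding subalgebra_def using gen_sigma_Pow[of T] gen_sigma_sub[of T]
  by (simp add: gen_sigma_sigma spc S)

lemma restr_props:
  shows "sets (restr \<mu> (gen_sigma T)) = gen_sigma T"
    and "space (restr \<mu> (gen_sigma T)) = space Omega"
    and "prob_space (restr \<mu> (gen_sigma T))"
    and "A \<in> gen_sigma T \<Longrightarrow> emeasure (restr \<mu> (gen_sigma T)) A = emeasure \<mu> A"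
    and "A \<in> gen_sigma T \<Longrightarrow> measure (restr \<mu> (gen_sigma T)) A = measure \<mu> A"
proof -
  show "sets (restr \<mu> (gen_sigma T)) = gen_sigma T"
    unfolding restr_eq using sets_restr_to_subalg[OF subalg] gen_sigma_Pow[of T]
    by (simp add: gen_sigma_sigma)
  show "space (restr \<mu> (gen_sigma T)) = space Omega"
    unfolding restr_eq space_restr_to_subalg spc ..
  show "prob_space (restr \<mu> (gen_sigma T))"
    unfolding restr_eq by (rule prob_space_restr_to_subalg[OF subalg P])
  show "A \<in> gen_sigma T \<Longrightarrow> emeasure (restr \<mu> (gen_sigma T)) A = emeasure \<mu> A"
    unfolding restr_eq using gen_sigma_Pow[of T]
    by (intro emeasure_restr_to_subalg[OF subalg]) (simp add: gen_sigma_sigma)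
  then show "A \<in> gen_sigma T \<Longrightarrow> measure (restr \<mu> (gen_sigma T)) A = measure \<mu> A"
    by (simp add: measure_def)
qed

lemma sets_UM: "sets UM = U" and sets_VM: "sets VM = V"
  and space_UM: "space UM = space Omega" and space_VM: "space VM = space Omega"
  and prob_UM: "prob_space UM" and prob_VM: "prob_space VM"
  unfolding UM_def VM_def U_def V_def using restr_props by auto

lemma meas_UM: "A \<in> U \<Longrightarrow> measure UM A = measure \<mu> A"
  and meas_VM: "B \<in> V \<Longrightarrow> measure VM B = measure \<mu> B"
  unfolding UM_def VM_def U_def V_def using restr_props by auto

lemma U_sub: "U \<subseteq> sets \<mu>" and V_sub: "V \<subseteq> sets \<mu>"
  unfolding U_def V_def S using gen_sigma_sub by auto

lemma space_PM: "space PM = space Omega \<times> space Omega"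
  unfolding PM_def space_pair_measure space_UM space_VM ..

lemma sets_PM: "sets PM = sigma_sets (space Omega \<times> space Omega) {a \<times> b | a b. a \<in> U \<and> b \<in> V}"
  unfolding PM_def sets_pair_measure space_UM space_VM sets_UM sets_VM ..

lemma prob_PM: "prob_space PM"
  unfolding PM_def using prob_UM prob_VM by (rule prob_space_pair)

lemma id_meas_U: "(\<lambda>x. x) \<in> \<mu> \<rightarrow>\<^sub>M UM"
proof (rule measurableI)
  fix x assume "x \<in> space \<mu>" then show "x \<in> space UM" using spc space_UM by simp
next
  fix A assume "A \<in> sets UM"
  then have "A \<in> U" using sets_UM by simp
  moreover have "A \<subseteq> space \<mu>" using \<open>A \<in> U\<close> U_sub sets.sets_into_space by blast
  ultimately show "(\<lambda>x. x) -` A \<inter> space \<mu> \<in> sets \<mu>" using U_sub by (simp add: Int_absorb2 subsetD)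
qed

lemma id_meas_V: "(\<lambda>x. x) \<in> \<mu> \<rightarrow>\<^sub>M VM"
proof (rule measurableI)
  fix x assume "x \<in> space \<mu>" then show "x \<in> space VM" using spc space_VM by simp
next
  fix A assume "A \<in> sets VM"
  then have "A \<in> V" using sets_VM by simp
  moreover have "A \<subseteq> space \<mu>" using \<open>A \<in> V\<close> V_sub sets.sets_into_space by blast
  ultimately show "(\<lambda>x. x) -` A \<inter> space \<mu> \<in> sets \<mu>" using V_sub by (simp add: Int_absorb2 subsetD)
qed

lemma diag_meas: "(\<lambda>\<omega>. (\<omega>, \<omega>)) \<in> \<mu> \<rightarrow>\<^sub>M PM"
  unfolding PM_def using id_meas_U id_meas_V by (rule measurable_Pair)

lemma prob_M1: "prob_space M1"
  unfolding M1_def using prob_space.prob_space_distr[OF P diag_meas] .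

lemma sets_M1: "sets M1 = sets PM"
  unfolding M1_def by simp

lemma rect_PM: "A \<in> U \<Longrightarrow> B \<in> V \<Longrightarrow> A \<times> B \<in> sets PM"
  unfolding PM_def using sets_UM sets_VM by (auto intro: pair_measureI)

lemma M1_rect: "A \<in> U \<Longrightarrow> B \<in> V \<Longrightarrow> measure M1 (A \<times> B) = measure \<mu> (A \<inter> B)"
proof -
  assume A: "A \<in> U" and B: "B \<in> V"
  have "measure M1 (A \<times> B) = measure \<mu> ((\<lambda>\<omega>. (\<omega>, \<omega>)) -` (A \<times> B) \<inter> space \<mu>)"
    unfolding M1_def using rect_PM[OF A B] diag_meas by (rule measure_distr[rotated])
  moreover have "(\<lambda>\<omega>. (\<omega>, \<omega>)) -` (A \<times> B) \<inter> space \<mu> = A \<inter> B"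
    using A U_sub sets.sets_into_space by blast
  ultimately show ?thesis by simp
qed

lemma PM_rect: "A \<in> U \<Longrightarrow> B \<in> V \<Longrightarrow> measure PM (A \<times> B) = measure \<mu> A * measure \<mu> B"
proof -
  assume A: "A \<in> U" and B: "B \<in> V"
  interpret VMs: prob_space VM by (rule prob_VM)
  have "emeasure PM (A \<times> B) = emeasure UM A * emeasure VM B"
    unfolding PM_def using A B sets_UM sets_VM by (intro VMs.emeasure_pair_measure_Times) auto
  then have "measure PM (A \<times> B) = measure UM A * measure VM B"
    by (simp add: measure_def enn2real_mult)
  then show ?thesis using meas_UM[OF A] meas_VM[OF B] by simp
qed

lemma nu_bound: "\<bar>nu W\<bar> \<le> 1"
proof -
  interpret a: prob_space M1 by (rule prob_M1)
  interpret b: prob_space PM by (rule prob_PM)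
  have "measure M1 W \<le> 1" "measure PM W \<le> 1" "0 \<le> measure M1 W" "0 \<le> measure PM W"
    by auto
  then show ?thesis unfolding nu_def by linarith
qed

lemma meas_diff_le:
  assumes "finite_measure M" "W \<in> sets M" "W' \<in> sets M"
  shows "\<bar>measure M W - measure M W'\<bar> \<le> measure M ((W - W') \<union> (W' - W))"
proof -
  interpret finite_measure M by (rule assms(1))
  have D: "(W - W') \<union> (W' - W) \<in> sets M" using assms by auto
  have "measure M W \<le> measure M (W' \<union> ((W - W') \<union> (W' - W)))"
    using assms D by (intro finite_measure_mono) auto
  also have "\<dots> \<le> measure M W' + measure M ((W - W') \<union> (W' - W))"
    using assms D by (intro measure_Un_le) auto
  finally have 1: "measure M W \<le> measure M W' + measure M ((W - W') \<union> (W' - W))" .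
  have "measure M W' \<le> measure M (W \<union> ((W - W') \<union> (W' - W)))"
    using assms D by (intro finite_measure_mono) auto
  also have "\<dots> \<le> measure M W + measure M ((W - W') \<union> (W' - W))"
    using assms D by (intro measure_Un_le) auto
  finally have 2: "measure M W' \<le> measure M W + measure M ((W - W') \<union> (W' - W))" .
  show ?thesis using 1 2 by linarith
qed

lemma nu_diff:
  assumes "W \<in> sets PM" "W' \<in> sets PM"
  shows "\<bar>nu W - nu W'\<bar> \<le> measure M1 ((W - W') \<union> (W' - W)) + measure PM ((W - W') \<union> (W' - W))"
proof -
  have f1: "finite_measure M1" using prob_M1 prob_space.finite_measure by blast
  have f2: "finite_measure PM" using prob_PM prob_space.finite_measure by blast
  show ?thesis
    using meas_diff_le[OF f1, of W W'] meas_diff_le[OF f2, of W W'] assms sets_M1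
    unfolding nu_def by (simp add: abs_le_iff)
qed

end



context bsetup begin

definition "jp n = n - m - j + 1"
definition "cell n l p = cube_event 1 j l (fst p) \<times> cube_event (j+m) (jp n) l (snd p)"
definition "Idx n l = cube_idx j l \<times> cube_idx (jp n) l"
definition "sat n l W \<longleftrightarrow> W \<subseteq> space Omega \<times> space Omega \<and>
   (\<forall>p\<in>Idx n l. cell n l p \<subseteq> W \<or> cell n l p \<inter> W = {})"
definition "Dnl n l = (1/2) * (\<Sum>p\<in>Idx n l. \<bar>nu (cell n l p)\<bar>)"

lemma finite_Idx: "finite (Idx n l)"
  unfolding Idx_def using finite_cube_idx by simp

lemma ceU: "cube_event 1 j l a \<in> U"
  unfolding U_def by (rule cube_event_in) auto

lemma ceV: "cube_event (j+m) k l b \<in> V"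
  unfolding V_def by (rule cube_event_in) auto

lemma cell_sets: "cell n l p \<in> sets PM"
  unfolding cell_def using ceU ceV rect_PM by blast

lemma cell_sub: "cell n l p \<subseteq> space Omega \<times> space Omega"
  unfolding cell_def using cube_event_sub by blast

lemma nu_cell: "nu (cell n l (a, b)) =
   measure \<mu> (cube_event 1 j l a \<inter> cube_event (j+m) (jp n) l b)
   - measure \<mu> (cube_event 1 j l a) * measure \<mu> (cube_event (j+m) (jp n) l b)"
  unfolding nu_def cell_def using M1_rect[OF ceU ceV] PM_rect[OF ceU ceV] by simp

lemma Dnl_eq: "beta_nlj \<mu> n l m j = Dnl n l"
  unfolding beta_nlj_def Dnl_def Let_def Idx_def jp_def[symmetric]
  by (simp add: sum.cartesian_product) (auto intro!: sum.cong simp: nu_cell)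

lemma cell_disj:
  assumes "p \<in> Idx n l" "q \<in> Idx n l" "p \<noteq> q"
  shows "cell n l p \<inter> cell n l q = {}"
proof (cases "fst p = fst q")
  case True
  then have "snd p \<noteq> snd q" using assms(3) by (simp add: prod_eq_iff)
  then have "cube_event (j+m) (jp n) l (snd p) \<inter> cube_event (j+m) (jp n) l (snd q) = {}"
    using assms by (intro cube_event_disj) (auto simp: Idx_def)
  then show ?thesis unfolding cell_def by blast
next
  case False
  then have "cube_event 1 j l (fst p) \<inter> cube_event 1 j l (fst q) = {}"
    using assms by (intro cube_event_disj) (auto simp: Idx_def)
  then show ?thesis unfolding cell_def by blast
qed

lemma cell_cover:
  assumes "x \<in> space Omega \<times> space Omega"
  shows "\<exists>p\<in>Idx n l. x \<in> cell n l p"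
proof -
  have x1: "fst x \<in> space Omega" and x2: "snd x \<in> space Omega" using assms by auto
  obtain a where a: "a \<in> cube_idx j l" "fst x \<in> cube_event 1 j l a"
    using cube_event_cover[OF x1] by blast
  obtain b where b: "b \<in> cube_idx (jp n) l" "snd x \<in> cube_event (j+m) (jp n) l b"
    using cube_event_cover[OF x2] by blast
  show ?thesis using a b by (intro bexI[of _ "(a,b)"]) (auto simp: cell_def Idx_def mem_Times_iff)
qed

lemma union_cells: "(\<Union>p\<in>Idx n l. cell n l p) = space Omega \<times> space Omega"
proof
  show "(\<Union>p\<in>Idx n l. cell n l p) \<subseteq> space Omega \<times> space Omega"
    using cell_sub by (intro UN_least) 
  show "space Omega \<times> space Omega \<subseteq> (\<Union>p\<in>Idx n l. cell n l p)"
  proof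
    fix x assume "x \<in> space Omega \<times> space Omega"
    then obtain p where "p \<in> Idx n l" "x \<in> cell n l p" using cell_cover by blast
    then show "x \<in> (\<Union>p\<in>Idx n l. cell n l p)" by blast
  qed
qed

lemma sat_decomp:
  assumes "sat n l W"
  shows "W = (\<Union>p\<in>{p\<in>Idx n l. cell n l p \<subseteq> W}. cell n l p)"
proof
  show "W \<subseteq> (\<Union>p\<in>{p\<in>Idx n l. cell n l p \<subseteq> W}. cell n l p)"
  proof
    fix x assume x: "x \<in> W"
    then have "x \<in> space Omega \<times> space Omega" using assms sat_def by blast
    then obtain p where p: "p \<in> Idx n l" "x \<in> cell n l p" using cell_cover by blast
    then have "cell n l p \<subseteq> W" using assms x unfolding sat_def by blast
    then show "x \<in> (\<Union>p\<in>{p\<in>Idx n l. cell n l p \<subseteq> W}. cell n l p)" using p by blast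
  qed
qed blast

lemma meas_sum:
  assumes "finite_measure M" "sets M = sets PM" "S \<subseteq> Idx n l"
  shows "measure M (\<Union>p\<in>S. cell n l p) = (\<Sum>p\<in>S. measure M (cell n l p))"
proof (rule measure_finite_Union)
  show "finite S" using assms(3) finite_Idx finite_subset by blast
  show "(cell n l) ` S \<subseteq> sets M" using cell_sets assms(2) by auto
  show "disjoint_family_on (cell n l) S" using cell_disj assms(3)
    unfolding disjoint_family_on_def by blast
  show "\<And>i. i \<in> S \<Longrightarrow> emeasure M (cell n l i) \<noteq> \<infinity>"
    using finite_measure.emeasure_finite[OF assms(1)] by simp
qed

lemma nu_sum:
  assumes "S \<subseteq> Idx n l"
  shows "nu (\<Union>p\<in>S. cell n l p) = (\<Sum>p\<in>S. nu (cell n l p))"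
proof -
  have f1: "finite_measure M1" using prob_M1 prob_space.finite_measure by blast
  have f2: "finite_measure PM" using prob_PM prob_space.finite_measure by blast
  show ?thesis unfolding nu_def
    using meas_sum[OF f1 sets_M1 assms] meas_sum[OF f2 refl assms] by (simp add: sum_subtractf)
qed

lemma nu_total: "(\<Sum>p\<in>Idx n l. nu (cell n l p)) = 0"
proof -
  have "(\<Sum>p\<in>Idx n l. nu (cell n l p)) = nu (space Omega \<times> space Omega)"
    using nu_sum[of "Idx n l" n l] union_cells by simp
  also have "\<dots> = 0"
  proof -
    interpret a: prob_space M1 by (rule prob_M1)
    interpret b: prob_space PM by (rule prob_PM)
    have "space M1 = space PM" unfolding M1_def by simp
    then show ?thesis unfolding nu_def using space_PM a.prob_space b.prob_space by simp
  qed
  finally show ?thesis .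
qed

lemma sat_bound:
  assumes "sat n l W"
  shows "\<bar>nu W\<bar> \<le> Dnl n l"
proof -
  define S where "S = {p\<in>Idx n l. cell n l p \<subseteq> W}"
  define f where "f p = nu (cell n l p)" for p
  have SI: "S \<subseteq> Idx n l" unfolding S_def by blast
  have fin: "finite (Idx n l)" by (rule finite_Idx)
  have WW: "W = (\<Union>p\<in>S. cell n l p)" unfolding S_def by (rule sat_decomp[OF assms])
  have W: "nu W = sum f S" using nu_sum[OF SI] unfolding f_def by (subst WW) simp
  have tot: "sum f (Idx n l) = 0" using nu_total unfolding f_def .
  have "sum f S \<le> sum (\<lambda>p. max (f p) 0) S" by (intro sum_mono) simp
  also have "\<dots> \<le> sum (\<lambda>p. max (f p) 0) (Idx n l)" by (intro sum_mono2[OF fin SI]) simp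
  also have "\<dots> = sum (\<lambda>p. (\<bar>f p\<bar> + f p) / 2) (Idx n l)" by (intro sum.cong) auto
  also have "\<dots> = Dnl n l" unfolding Dnl_def f_def using nu_total
    by (simp add: sum_divide_distrib[symmetric] sum.distrib)
  finally have up: "nu W \<le> Dnl n l" using W by simp
  have "sum (\<lambda>p. (f p - \<bar>f p\<bar>) / 2) (Idx n l) = sum (\<lambda>p. min (f p) 0) (Idx n l)"
    by (intro sum.cong) auto
  also have "\<dots> \<le> sum (\<lambda>p. min (f p) 0) S" 
  proof -
    have "- sum (\<lambda>p. min (f p) 0) S \<le> - sum (\<lambda>p. min (f p) 0) (Idx n l)"
      unfolding sum_negf[symmetric] by (intro sum_mono2[OF fin SI]) simp
    then show ?thesis by simp
  qed
  also have "\<dots> \<le> sum f S" by (intro sum_mono) simp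
  finally have "sum (\<lambda>p. (f p - \<bar>f p\<bar>) / 2) (Idx n l) \<le> nu W" using W by simp
  moreover have "sum (\<lambda>p. (f p - \<bar>f p\<bar>) / 2) (Idx n l) = - Dnl n l" unfolding Dnl_def f_def using nu_total
    by (simp add: sum_divide_distrib[symmetric] sum_subtractf)
  ultimately show ?thesis using up by linarith
qed

lemma beta_alg_eq: "beta_alg \<mu> U V = (SUP W\<in>sets PM. \<bar>nu W\<bar>)"
  unfolding beta_alg_def nu_def M1_def PM_def UM_def VM_def ..

lemma bdd_nu: "bdd_above ((\<lambda>W. \<bar>nu W\<bar>) ` XX)"
  using nu_bound by (intro bdd_aboveI[of _ 1]) auto

lemma Dnl_le_beta: "Dnl n l \<le> beta_alg \<mu> U V"
proof -
  define f where "f p = nu (cell n l p)" for p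
  define S where "S = {p\<in>Idx n l. 0 \<le> f p}"
  have SI: "S \<subseteq> Idx n l" unfolding S_def by blast
  have fin: "finite (Idx n l)" by (rule finite_Idx)
  define W where "W = (\<Union>p\<in>S. cell n l p)"
  have Ws: "W \<in> sets PM" unfolding W_def using cell_sets SI finite_subset[OF SI fin]
    by (intro sets.finite_UN) auto
  have "nu W = sum f S" using nu_sum[OF SI] unfolding W_def f_def by simp
  also have "\<dots> = sum (\<lambda>p. max (f p) 0) (Idx n l)"
  proof -
    have "sum (\<lambda>p. max (f p) 0) (Idx n l) = sum (\<lambda>p. max (f p) 0) S"
      by (intro sum.mono_neutral_right[OF fin SI]) (auto simp: S_def)
    also have "\<dots> = sum f S" by (intro sum.cong) (auto simp: S_def)
    finally show ?thesis by simp
  qed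
  also have "\<dots> = sum (\<lambda>p. (\<bar>f p\<bar> + f p) / 2) (Idx n l)" by (intro sum.cong) auto
  also have "\<dots> = Dnl n l" unfolding Dnl_def f_def using nu_total
    by (simp add: sum_divide_distrib[symmetric] sum.distrib)
  finally have "Dnl n l \<le> \<bar>nu W\<bar>" by simp
  also have "\<dots> \<le> (SUP W\<in>sets PM. \<bar>nu W\<bar>)" by (rule cSUP_upper[OF Ws bdd_nu])
  finally show ?thesis unfolding beta_alg_eq .
qed

lemma jp_mono: "n \<le> n' \<Longrightarrow> jp n \<le> jp n'"
  unfolding jp_def by simp

lemma sat_mono:
  assumes "sat n l W" "n \<le> n'" "l \<le> l'"
  shows "sat n' l' W"
  unfolding sat_def
proof (intro conjI ballI)
  show "W \<subseteq> space Omega \<times> space Omega" using assms sat_def by blast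
  fix p' assume p': "p' \<in> Idx n' l'"
  obtain a where a: "a \<in> cube_idx j l" "cube_event 1 j l' (fst p') \<subseteq> cube_event 1 j l a"
    using cube_event_nest[of j j l l' "fst p'" 1] p' assms(3) by (auto simp: Idx_def)
  obtain b where b: "b \<in> cube_idx (jp n) l"
     "cube_event (j+m) (jp n') l' (snd p') \<subseteq> cube_event (j+m) (jp n) l b"
    using cube_event_nest[of "jp n" "jp n'" l l' "snd p'" "j+m"] p' assms(3) jp_mono[OF assms(2)]
    by (auto simp: Idx_def)
  have sub: "cell n' l' p' \<subseteq> cell n l (a, b)" using a b unfolding cell_def by auto
  have "(a,b) \<in> Idx n l" using a b by (simp add: Idx_def)
  then have "cell n l (a,b) \<subseteq> W \<or> cell n l (a,b) \<inter> W = {}" using assms(1) sat_def by blast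
  then show "cell n' l' p' \<subseteq> W \<or> cell n' l' p' \<inter> W = {}" using sub by blast
qed

end



lemma le_as_dyadic:
  assumes "\<omega> \<in> space Omega"
  shows "X t \<omega> \<le> a \<longleftrightarrow> (\<forall>l. X t \<omega> \<in> (\<Union>i\<in>{i. i < 2^l \<and> real i / 2^l \<le> a}. dyadic l i))"
proof
  assume le: "X t \<omega> \<le> a"
  show "\<forall>l. X t \<omega> \<in> (\<Union>i\<in>{i. i < 2^l \<and> real i / 2^l \<le> a}. dyadic l i)"
  proof
    fix l
    obtain i where i: "i < 2^l" "X t \<omega> \<in> dyadic l i" using dyadic_cover X_range[OF assms] by blast
    then have "real i / 2^l \<le> a" using dyadic_bounds(1)[OF i(2)] le by linarith
    then show "X t \<omega> \<in> (\<Union>i\<in>{i. i < 2^l \<and> real i / 2^l \<le> a}. dyadic l i)" using i by blast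
  qed
next
  assume H: "\<forall>l. X t \<omega> \<in> (\<Union>i\<in>{i. i < 2^l \<and> real i / 2^l \<le> a}. dyadic l i)"
  show "X t \<omega> \<le> a"
  proof (rule ccontr)
    assume "\<not> X t \<omega> \<le> a"
    then have pos: "0 < X t \<omega> - a" by simp
    obtain l where l: "(1/2::real)^l < X t \<omega> - a" using real_arch_pow_inv[OF pos] by force
    obtain i where i: "real i / 2^l \<le> a" "X t \<omega> \<in> dyadic l i" using H by blast
    have "X t \<omega> \<le> (real i + 1) / 2^l" using dyadic_bounds(2)[OF i(2)] .
    also have "\<dots> = real i / 2^l + (1/2)^l" by (simp add: add_divide_distrib power_one_over)
    finally show False using i(1) l by linarith
  qed
qed

lemma borel_lift:
  fixes E :: "(nat \<Rightarrow> real) set \<Rightarrow> 'b set"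
  assumes G: "G \<subseteq> Pow \<Omega>2"
  and basic: "\<And>l K. K \<subseteq> {..<2^l} \<Longrightarrow> E (X t -` (\<Union>i\<in>K. dyadic l i) \<inter> space Omega) \<in> sigma_sets \<Omega>2 G"
  and compl: "\<And>A. A \<subseteq> space Omega \<Longrightarrow> E (space Omega - A) = \<Omega>2 - E A"
  and un: "\<And>A. E (\<Union>i::nat. A i) = (\<Union>i. E (A i))"
  and int: "\<And>A. E (\<Inter>i::nat. A i) = (\<Inter>i. E (A i))"
  and emp: "E {} = {}"
  and Bo: "Bo \<in> sets borel"
  shows "E (X t -` Bo \<inter> space Omega) \<in> sigma_sets \<Omega>2 G"
proof -
  have "sets (borel :: real measure) = sigma_sets UNIV (range (\<lambda>a. {..a::real}))"
    by (subst borel_eq_atMost) (simp add: sets_measure_of)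
  then have "Bo \<in> sigma_sets UNIV (range (\<lambda>a. {..a::real}))" using Bo by simp
  then show ?thesis
  proof (induction Bo rule: sigma_sets.induct)
    case (Basic B)
    then obtain a where a: "B = {..a}" by blast
    define K where "K l = {i. i < 2^l \<and> real i / 2^l \<le> a}" for l :: nat
    have eq: "X t -` B \<inter> space Omega = (\<Inter>l. X t -` (\<Union>i\<in>K l. dyadic l i) \<inter> space Omega)"
      using le_as_dyadic unfolding a K_def by auto
    have "E (X t -` (\<Union>i\<in>K l. dyadic l i) \<inter> space Omega) \<in> sigma_sets \<Omega>2 G" for l
      by (rule basic) (auto simp: K_def)
    then show ?case unfolding eq int by (rule sigma_sets_Inter[OF G])
  next
    case Empty
    then show ?case using emp by (simp add: sigma_sets.Empty)
  next
    case (Compl B)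
    have "X t -` (UNIV - B) \<inter> space Omega = space Omega - (X t -` B \<inter> space Omega)" by auto
    then show ?case using Compl compl[of "X t -` B \<inter> space Omega"] by (auto intro: sigma_sets.Compl)
  next
    case (Union B)
    have eq: "X t -` (\<Union>i. B i) \<inter> space Omega = (\<Union>i. X t -` B i \<inter> space Omega)" by auto
    have "E (X t -` (\<Union>i. B i) \<inter> space Omega) = (\<Union>i. E (X t -` B i \<inter> space Omega))"
      unfolding eq by (rule un)
    then show ?case by (simp only:) (rule sigma_sets.Union, rule Union.IH)
  qed
qed

lemma gen_lift:
  fixes E :: "(nat \<Rightarrow> real) set \<Rightarrow> 'b set"
  assumes compl: "\<And>A. A \<subseteq> space Omega \<Longrightarrow> E (space Omega - A) = \<Omega>2 - E A"
  and un: "\<And>A. E (\<Union>i::nat. A i) = (\<Union>i. E (A i))"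
  and emp: "E {} = {}"
  and basic: "\<And>t Bo. t \<in> T \<Longrightarrow> Bo \<in> sets borel \<Longrightarrow> E (X t -` Bo \<inter> space Omega) \<in> sigma_sets \<Omega>2 G"
  and A: "A \<in> gen_sigma T"
  shows "E A \<in> sigma_sets \<Omega>2 G"
  using A unfolding gen_sigma_def
proof (induction A rule: sigma_sets.induct)
  case (Basic a)
  then show ?case using basic by blast
next
  case Empty
  then show ?case using emp by (simp add: sigma_sets.Empty)
next
  case (Compl a)
  have "a \<subseteq> space Omega" using Compl.hyps sigma_sets_into_sp[OF gen_Pow] by blast
  then show ?case using Compl compl by (auto intro: sigma_sets.Compl)
next
  case (Union a)
  then show ?case using un by (auto intro: sigma_sets.Union)
qed

context bsetup begin

definition "Alg = {W \<in> sets PM. \<exists>n l. sat n l W}"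

lemma sat_Un: "sat n l W1 \<Longrightarrow> sat n l W2 \<Longrightarrow> sat n l (W1 \<union> W2)"
  unfolding sat_def
proof (intro conjI ballI)
  assume a: "W1 \<subseteq> space Omega \<times> space Omega \<and> (\<forall>p\<in>Idx n l. cell n l p \<subseteq> W1 \<or> cell n l p \<inter> W1 = {})"
     and b: "W2 \<subseteq> space Omega \<times> space Omega \<and> (\<forall>p\<in>Idx n l. cell n l p \<subseteq> W2 \<or> cell n l p \<inter> W2 = {})"
  show "W1 \<union> W2 \<subseteq> space Omega \<times> space Omega" using a b by simp
  fix p assume p: "p \<in> Idx n l"
  then have "cell n l p \<subseteq> W1 \<or> cell n l p \<inter> W1 = {}" "cell n l p \<subseteq> W2 \<or> cell n l p \<inter> W2 = {}"
    using a b by auto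
  then show "cell n l p \<subseteq> W1 \<union> W2 \<or> cell n l p \<inter> (W1 \<union> W2) = {}" by auto
qed

lemma sat_Int: "sat n l W1 \<Longrightarrow> sat n l W2 \<Longrightarrow> sat n l (W1 \<inter> W2)"
  unfolding sat_def
proof (intro conjI ballI)
  assume a: "W1 \<subseteq> space Omega \<times> space Omega \<and> (\<forall>p\<in>Idx n l. cell n l p \<subseteq> W1 \<or> cell n l p \<inter> W1 = {})"
     and b: "W2 \<subseteq> space Omega \<times> space Omega \<and> (\<forall>p\<in>Idx n l. cell n l p \<subseteq> W2 \<or> cell n l p \<inter> W2 = {})"
  show "W1 \<inter> W2 \<subseteq> space Omega \<times> space Omega" using a b by auto
  fix p assume p: "p \<in> Idx n l"
  then have "cell n l p \<subseteq> W1 \<or> cell n l p \<inter> W1 = {}" "cell n l p \<subseteq> W2 \<or> cell n l p \<inter> W2 = {}"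
    using a b by auto
  then show "cell n l p \<subseteq> W1 \<inter> W2 \<or> cell n l p \<inter> (W1 \<inter> W2) = {}" by auto
qed

lemma sat_compl: "sat n l W \<Longrightarrow> sat n l (space Omega \<times> space Omega - W)"
  unfolding sat_def
proof (intro conjI ballI)
  assume a: "W \<subseteq> space Omega \<times> space Omega \<and> (\<forall>p\<in>Idx n l. cell n l p \<subseteq> W \<or> cell n l p \<inter> W = {})"
  show "space Omega \<times> space Omega - W \<subseteq> space Omega \<times> space Omega" by auto
  fix p assume p: "p \<in> Idx n l"
  then have "cell n l p \<subseteq> W \<or> cell n l p \<inter> W = {}" using a by auto
  moreover have "cell n l p \<subseteq> space Omega \<times> space Omega" by (rule cell_sub)
  ultimately show "cell n l p \<subseteq> space Omega \<times> space Omega - W \<or> cell n l p \<inter> (space Omega \<times> space Omega - W) = {}"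
    by auto
qed

lemma sat_empty: "sat n l {}"
  unfolding sat_def by simp

lemma Alg_Un: "W1 \<in> Alg \<Longrightarrow> W2 \<in> Alg \<Longrightarrow> W1 \<union> W2 \<in> Alg"
proof -
  assume a: "W1 \<in> Alg" "W2 \<in> Alg"
  then obtain n1 l1 n2 l2 where s: "sat n1 l1 W1" "sat n2 l2 W2" unfolding Alg_def by blast
  have "sat (max n1 n2) (max l1 l2) W1" "sat (max n1 n2) (max l1 l2) W2"
    using sat_mono s by auto
  then have "sat (max n1 n2) (max l1 l2) (W1 \<union> W2)" by (rule sat_Un)
  then show ?thesis using a unfolding Alg_def by auto
qed

lemma Alg_Int: "W1 \<in> Alg \<Longrightarrow> W2 \<in> Alg \<Longrightarrow> W1 \<inter> W2 \<in> Alg"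
proof -
  assume a: "W1 \<in> Alg" "W2 \<in> Alg"
  then obtain n1 l1 n2 l2 where s: "sat n1 l1 W1" "sat n2 l2 W2" unfolding Alg_def by blast
  have "sat (max n1 n2) (max l1 l2) W1" "sat (max n1 n2) (max l1 l2) W2"
    using sat_mono s by auto
  then have "sat (max n1 n2) (max l1 l2) (W1 \<inter> W2)" by (rule sat_Int)
  then show ?thesis using a unfolding Alg_def by auto
qed

lemma Alg_compl: "W \<in> Alg \<Longrightarrow> space Omega \<times> space Omega - W \<in> Alg"
proof -
  assume a: "W \<in> Alg"
  then obtain n l where s: "sat n l W" and w: "W \<in> sets PM" unfolding Alg_def by blast
  have "space PM - W \<in> sets PM" using w by blast
  then have "space Omega \<times> space Omega - W \<in> sets PM" using space_PM by simp
  then show ?thesis using sat_compl[OF s] unfolding Alg_def by blast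
qed

lemma Alg_empty: "{} \<in> Alg"
  unfolding Alg_def using sat_empty by auto

lemma Alg_sub: "Alg \<subseteq> sets PM"
  unfolding Alg_def by auto

lemma Alg_Pow: "Alg \<subseteq> Pow (space Omega \<times> space Omega)"
proof
  fix W assume "W \<in> Alg"
  then have "W \<in> sets PM" using Alg_sub by blast
  then have "W \<subseteq> space PM" by (rule sets.sets_into_space)
  then show "W \<in> Pow (space Omega \<times> space Omega)" using space_PM by simp
qed

lemma Alg_UN: "(\<And>i. i < (N::nat) \<Longrightarrow> A i \<in> Alg) \<Longrightarrow> (\<Union>i<N. A i) \<in> Alg"
proof (induction N)
  case 0 then show ?case using Alg_empty by simp
next
  case (Suc N)
  have "(\<Union>i<Suc N. A i) = A N \<union> (\<Union>i<N. A i)" by (auto simp: lessThan_Suc)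
  then show ?case using Suc Alg_Un by simp
qed

lemma finUN_borel: "(\<Union>i\<in>K. dyadic l i) \<in> sets borel" if "K \<subseteq> {..<2^l}"
proof -
  have "finite K" using that finite_subset by blast
  then show ?thesis using dyadic_borel by (intro sets.finite_UN) auto
qed

lemma slabU:
  assumes t: "t \<in> {1..j}" and K: "K \<subseteq> {..<2^l}"
  shows "(X t -` (\<Union>i\<in>K. dyadic l i) \<inter> space Omega) \<times> space Omega \<in> Alg"
proof -
  let ?A = "X t -` (\<Union>i\<in>K. dyadic l i) \<inter> space Omega"
  have AU: "?A \<in> U" unfolding U_def using t finUN_borel[OF K] by (intro gen_sigma_basic) auto
  have OV: "space Omega \<in> V" unfolding V_def gen_sigma_def by (rule sigma_sets_top)
  have meas: "?A \<times> space Omega \<in> sets PM" by (rule rect_PM[OF AU OV])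
  have "sat 0 l (?A \<times> space Omega)" unfolding sat_def
  proof (intro conjI ballI)
    show "?A \<times> space Omega \<subseteq> space Omega \<times> space Omega" by auto
    fix p assume p: "p \<in> Idx 0 l"
    define r where "r = t - 1"
    have rj: "r < j" and tr: "1 + r = t" using t by (auto simp: r_def)
    have i0: "fst p r < 2^l" using p rj by (auto simp: Idx_def cube_idx_def)
    have inc: "X t \<omega> \<in> dyadic l (fst p r)" if "\<omega> \<in> cube_event 1 j l (fst p)" for \<omega>
      using that rj tr by (auto simp: cube_event_def)
    show "cell 0 l p \<subseteq> ?A \<times> space Omega \<or> cell 0 l p \<inter> (?A \<times> space Omega) = {}"
    proof (cases "fst p r \<in> K")
      case True
      then have "cell 0 l p \<subseteq> ?A \<times> space Omega"
        using inc cube_event_sub unfolding cell_def by fastforce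
      then show ?thesis by blast
    next
      case False
      have "cell 0 l p \<inter> (?A \<times> space Omega) = {}"
      proof (rule ccontr)
        assume "cell 0 l p \<inter> (?A \<times> space Omega) \<noteq> {}"
        then obtain x where x: "x \<in> cell 0 l p" "x \<in> ?A \<times> space Omega" by blast
        then obtain i where i: "i \<in> K" "X t (fst x) \<in> dyadic l i" by auto
        have "X t (fst x) \<in> dyadic l (fst p r)" using x inc unfolding cell_def by auto
        then have "i = fst p r" using dyadic_disj[OF _ i0] i K by blast
        then show False using i False by simp
      qed
      then show ?thesis by blast
    qed
  qed
  then show ?thesis using meas unfolding Alg_def by blast
qed

lemma slabV:
  assumes t: "t \<ge> j + m" and K: "K \<subseteq> {..<2^l}"
  shows "space Omega \<times> (X t -` (\<Union>i\<in>K. dyadic l i) \<inter> space Omega) \<in> Alg"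
proof -
  let ?A = "X t -` (\<Union>i\<in>K. dyadic l i) \<inter> space Omega"
  have AV: "?A \<in> V" unfolding V_def using t finUN_borel[OF K] by (intro gen_sigma_basic) auto
  have OU: "space Omega \<in> U" unfolding U_def gen_sigma_def by (rule sigma_sets_top)
  have meas: "space Omega \<times> ?A \<in> sets PM" by (rule rect_PM[OF OU AV])
  have "sat t l (space Omega \<times> ?A)" unfolding sat_def
  proof (intro conjI ballI)
    show "space Omega \<times> ?A \<subseteq> space Omega \<times> space Omega" by auto
    fix p assume p: "p \<in> Idx t l"
    define r where "r = t - (j + m)"
    have rj: "r < jp t" and tr: "j + m + r = t" using t by (auto simp: r_def jp_def)
    have i0: "snd p r < 2^l" using p rj by (auto simp: Idx_def cube_idx_def)
    have inc: "X t \<omega> \<in> dyadic l (snd p r)" if "\<omega> \<in> cube_event (j+m) (jp t) l (snd p)" for \<omega>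
      using that rj tr by (auto simp: cube_event_def)
    show "cell t l p \<subseteq> space Omega \<times> ?A \<or> cell t l p \<inter> (space Omega \<times> ?A) = {}"
    proof (cases "snd p r \<in> K")
      case True
      then have "cell t l p \<subseteq> space Omega \<times> ?A"
        using inc cube_event_sub unfolding cell_def by fastforce
      then show ?thesis by blast
    next
      case False
      have "cell t l p \<inter> (space Omega \<times> ?A) = {}"
      proof (rule ccontr)
        assume "cell t l p \<inter> (space Omega \<times> ?A) \<noteq> {}"
        then obtain x where x: "x \<in> cell t l p" "x \<in> space Omega \<times> ?A" by blast
        then obtain i where i: "i \<in> K" "X t (snd x) \<in> dyadic l i" by auto
        have "X t (snd x) \<in> dyadic l (snd p r)" using x inc unfolding cell_def by auto
        then have "i = snd p r" using dyadic_disj[OF _ i0] i K by blast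
        then show False using i False by simp
      qed
      then show ?thesis by blast
    qed
  qed
  then show ?thesis using meas unfolding Alg_def by blast
qed

lemma sigAlg_sub: "sigma_sets (space Omega \<times> space Omega) Alg \<subseteq> sets PM"
  using sets.sigma_sets_subset[of Alg PM] Alg_sub space_PM by simp

lemma rectU_in: "A \<in> U \<Longrightarrow> A \<times> space Omega \<in> sigma_sets (space Omega \<times> space Omega) Alg"
  unfolding U_def
proof (rule gen_lift[where E="\<lambda>A. A \<times> space Omega"])
  fix t :: nat and Bo :: "real set" assume t: "t \<in> {1..j}" and Bo: "Bo \<in> sets borel"
  show "(X t -` Bo \<inter> space Omega) \<times> space Omega \<in> sigma_sets (space Omega \<times> space Omega) Alg"
    using Alg_Pow _ _ _ _ _ Bo
  proof (rule borel_lift[where E="\<lambda>A. A \<times> space Omega"])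
    fix l :: nat and K :: "nat set" assume "K \<subseteq> {..<2^l}"
    then show "(X t -` (\<Union>i\<in>K. dyadic l i) \<inter> space Omega) \<times> space Omega \<in> sigma_sets (space Omega \<times> space Omega) Alg"
      using slabU[OF t] by (blast intro: sigma_sets.Basic)
  qed auto
qed auto

lemma rectV_in: "B \<in> V \<Longrightarrow> space Omega \<times> B \<in> sigma_sets (space Omega \<times> space Omega) Alg"
  unfolding V_def
proof (rule gen_lift[where E="\<lambda>B. space Omega \<times> B"])
  fix t :: nat and Bo :: "real set" assume t: "t \<in> {j+m..}" and Bo: "Bo \<in> sets borel"
  show "space Omega \<times> (X t -` Bo \<inter> space Omega) \<in> sigma_sets (space Omega \<times> space Omega) Alg"
    using Alg_Pow _ _ _ _ _ Bo
  proof (rule borel_lift[where E="\<lambda>B. space Omega \<times> B"])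
    fix l :: nat and K :: "nat set" assume "K \<subseteq> {..<2^l}"
    then show "space Omega \<times> (X t -` (\<Union>i\<in>K. dyadic l i) \<inter> space Omega) \<in> sigma_sets (space Omega \<times> space Omega) Alg"
      using slabV t by (blast intro: sigma_sets.Basic)
  qed auto
qed auto

lemma PM_sub_sigAlg: "sets PM \<subseteq> sigma_sets (space Omega \<times> space Omega) Alg"
  unfolding sets_PM
proof (rule sigma_sets_mono, safe)
  fix a b assume a: "a \<in> U" and b: "b \<in> V"
  interpret sa: sigma_algebra "space Omega \<times> space Omega" "sigma_sets (space Omega \<times> space Omega) Alg"
    by (rule sigma_algebra_sigma_sets[OF Alg_Pow])
  have "a \<subseteq> space Omega" using a U_sub sets.sets_into_space spc by blast
  moreover have "b \<subseteq> space Omega" using b V_sub sets.sets_into_space spc by blast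
  ultimately have "a \<times> b = (a \<times> space Omega) \<inter> (space Omega \<times> b)" by blast
  then show "a \<times> b \<in> sigma_sets (space Omega \<times> space Omega) Alg"
    using rectU_in[OF a] rectV_in[OF b] sa.Int by simp
qed

end



lemma tail_small:
  fixes A :: "nat \<Rightarrow> 'b set"
  assumes fm: "finite_measure M" and A: "range A \<subseteq> sets M" and e: "e > 0"
  shows "\<exists>N0. \<forall>N\<ge>N0. measure M ((\<Union>i. A i) - (\<Union>i<N. A i)) < e"
proof -
  interpret finite_measure M by (rule fm)
  define B where "B n = (\<Union>i<n. A i)" for n
  have Bs: "range B \<subseteq> sets M" using A unfolding B_def by (auto intro!: sets.finite_UN)
  have inc: "incseq B" unfolding B_def incseq_def by (auto intro: order_less_le_trans)
  have UB: "(\<Union>n. B n) = (\<Union>i. A i)" unfolding B_def by auto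
  have lim: "(\<lambda>n. measure M (B n)) \<longlonglongrightarrow> measure M (\<Union>i. A i)"
    using finite_Lim_measure_incseq[OF Bs inc] unfolding UB .
  then obtain N0 where N0: "\<And>n. n \<ge> N0 \<Longrightarrow> norm (measure M (B n) - measure M (\<Union>i. A i)) < e"
    using LIMSEQ_D[OF lim e] by blast
  have UA: "(\<Union>i. A i) \<in> sets M" using A by auto
  show ?thesis
  proof (intro exI allI impI)
    fix N assume "N \<ge> N0"
    then have "norm (measure M (B N) - measure M (\<Union>i. A i)) < e" by (rule N0)
    moreover have "measure M ((\<Union>i. A i) - B N) = measure M (\<Union>i. A i) - measure M (B N)"
      using UA Bs by (intro finite_measure_Diff) (auto simp: B_def)
    ultimately show "measure M ((\<Union>i. A i) - (\<Union>i<N. A i)) < e" unfolding B_def by simp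
  qed
qed

context bsetup begin

definition "dd W W' = measure M1 ((W - W') \<union> (W' - W)) + measure PM ((W - W') \<union> (W' - W))"
definition "approx W \<longleftrightarrow> (\<forall>e>0. \<exists>W'\<in>Alg. dd W W' < e)"

lemma fin_M1: "finite_measure M1" using prob_M1 prob_space.finite_measure by blast
lemma fin_PM: "finite_measure PM" using prob_PM prob_space.finite_measure by blast

lemma meas_cover:
  fixes N :: nat
  assumes fm: "finite_measure M" and sM: "sets M = sets PM"
    and T: "T \<in> sets PM" and D: "\<And>i. D i \<in> sets PM" and Z: "Z \<in> sets PM"
    and sub: "Z \<subseteq> T \<union> (\<Union>i<N. D i)"
  shows "measure M Z \<le> measure M T + (\<Sum>i<N. measure M (D i))"
proof -
  interpret finite_measure M by (rule fm)
  have U: "(\<Union>i<N. D i) \<in> sets M" using D sM by (auto intro!: sets.finite_UN)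
  have "measure M Z \<le> measure M (T \<union> (\<Union>i<N. D i))"
    using sub Z T U sM by (intro finite_measure_mono) auto
  also have "\<dots> \<le> measure M T + measure M (\<Union>i<N. D i)"
    using T U sM by (intro measure_Un_le) auto
  also have "measure M (\<Union>i<N. D i) \<le> (\<Sum>i<N. measure M (D i))"
    using D sM by (intro measure_UNION_le) auto
  finally show ?thesis by simp
qed

lemma approx_union:
  fixes A :: "nat \<Rightarrow> ((nat \<Rightarrow> real) \<times> (nat \<Rightarrow> real)) set"
  assumes A: "range A \<subseteq> sets PM" and IH: "\<And>i. approx (A i)"
  shows "approx (\<Union>i. A i)"
  unfolding approx_def
proof (intro allI impI)
  fix e :: real assume e: "e > 0"
  have A1: "range A \<subseteq> sets M1" using A sets_M1 by simp
  obtain N1 where N1: "\<And>N. N \<ge> N1 \<Longrightarrow> measure M1 ((\<Union>i. A i) - (\<Union>i<N. A i)) < e/4"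
    using tail_small[OF fin_M1 A1, of "e/4"] e by auto
  obtain N2 where N2: "\<And>N. N \<ge> N2 \<Longrightarrow> measure PM ((\<Union>i. A i) - (\<Union>i<N. A i)) < e/4"
    using tail_small[OF fin_PM A, of "e/4"] e by auto
  define N where "N = max N1 N2"
  define d where "d = e / (2 * (real N + 1))"
  have d: "d > 0" using e by (simp add: d_def)
  have "\<forall>i. \<exists>W'\<in>Alg. dd (A i) W' < d" using IH d unfolding approx_def by blast
  then obtain Wf where Wf: "\<And>i. Wf i \<in> Alg" "\<And>i. dd (A i) (Wf i) < d" by metis
  define Wt where "Wt = (\<Union>i<N. Wf i)"
  have Wt: "Wt \<in> Alg" unfolding Wt_def using Wf by (intro Alg_UN) auto
  define T where "T = (\<Union>i. A i) - (\<Union>i<N. A i)"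
  define Dl where "Dl i = (A i - Wf i) \<union> (Wf i - A i)" for i
  define Z where "Z = ((\<Union>i. A i) - Wt) \<union> (Wt - (\<Union>i. A i))"
  have sub: "Z \<subseteq> T \<union> (\<Union>i<N. Dl i)" unfolding Z_def T_def Dl_def Wt_def by blast
  have As: "\<And>i. A i \<in> sets PM" using A by auto
  have Wfs: "\<And>i. Wf i \<in> sets PM" using Wf Alg_sub by auto
  have UAs: "(\<Union>i. A i) \<in> sets PM" using As by auto
  have UAN: "(\<Union>i<N. A i) \<in> sets PM" using As by auto
  have Wts: "Wt \<in> sets PM" using Wt Alg_sub by auto
  have Ts: "T \<in> sets PM" unfolding T_def using UAs UAN by auto
  have Ds: "\<And>i. Dl i \<in> sets PM" unfolding Dl_def using As Wfs by auto
  have Zs: "Z \<in> sets PM" unfolding Z_def using UAs Wts by auto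
  have c1: "measure M1 Z \<le> measure M1 T + (\<Sum>i<N. measure M1 (Dl i))"
    by (rule meas_cover[OF fin_M1 sets_M1 Ts Ds Zs sub])
  have c2: "measure PM Z \<le> measure PM T + (\<Sum>i<N. measure PM (Dl i))"
    by (rule meas_cover[OF fin_PM refl Ts Ds Zs sub])
  have t1: "measure M1 T < e/4" unfolding T_def using N1 by (simp add: N_def)
  have t2: "measure PM T < e/4" unfolding T_def using N2 by (simp add: N_def)
  have "(\<Sum>i<N. measure M1 (Dl i)) + (\<Sum>i<N. measure PM (Dl i)) = (\<Sum>i<N. dd (A i) (Wf i))"
    unfolding dd_def Dl_def by (simp add: sum.distrib)
  also have "\<dots> \<le> (\<Sum>i<N. d)" using Wf(2) by (intro sum_mono) (simp add: less_imp_le)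
  also have "\<dots> = real N * d" by simp
  also have "\<dots> \<le> e / 2"
  proof -
    have "real N * d = e / 2 * (real N / (real N + 1))" unfolding d_def by (simp add: field_simps)
    also have "\<dots> \<le> e / 2 * 1" using e by (intro mult_left_mono) auto
    finally show ?thesis by simp
  qed
  finally have s: "(\<Sum>i<N. measure M1 (Dl i)) + (\<Sum>i<N. measure PM (Dl i)) \<le> e / 2" .
  have "dd (\<Union>i. A i) Wt < e" unfolding dd_def Z_def[symmetric] using c1 c2 t1 t2 s by linarith
  then show "\<exists>W'\<in>Alg. dd (\<Union>i. A i) W' < e" using Wt by blast
qed

lemma approx_all:
  assumes W: "W \<in> sets PM"
  shows "approx W"
proof -
  have Ist: "Int_stable Alg" unfolding Int_stable_def using Alg_Int by blast
  have W2: "W \<in> sigma_sets (space Omega \<times> space Omega) Alg" using W PM_sub_sigAlg by blast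
  show ?thesis using Ist Alg_Pow W2
  proof (induction W rule: sigma_sets_induct_disjoint)
    case (basic A)
    then show ?case unfolding approx_def dd_def by (intro allI impI bexI[of _ A]) auto
  next
    case empty
    then show ?case unfolding approx_def dd_def using Alg_empty by (intro allI impI bexI[of _ "{}"]) auto
  next
    case (compl A)
    show ?case unfolding approx_def
    proof (intro allI impI)
      fix e :: real assume e: "e > 0"
      then obtain W' where W': "W' \<in> Alg" "dd A W' < e" using compl.IH unfolding approx_def by blast
      have Asub: "A \<subseteq> space Omega \<times> space Omega" using compl.hyps sigAlg_sub sets.sets_into_space space_PM by blast
      have Wsub: "W' \<subseteq> space Omega \<times> space Omega" using W' Alg_Pow by blast
      have eq: "((space Omega \<times> space Omega - A) - (space Omega \<times> space Omega - W')) \<union>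
                ((space Omega \<times> space Omega - W') - (space Omega \<times> space Omega - A))
              = (A - W') \<union> (W' - A)" using Asub Wsub by blast
      have "dd (space Omega \<times> space Omega - A) (space Omega \<times> space Omega - W') < e"
        using W'(2) unfolding dd_def eq .
      then show "\<exists>W'\<in>Alg. dd (space Omega \<times> space Omega - A) W' < e" using Alg_compl[OF W'(1)] by blast
    qed
  next
    case (union A)
    have "range A \<subseteq> sets PM" using union.hyps sigAlg_sub by blast
    then show ?case using union.IH by (rule approx_union)
  qed
qed

lemma beta_bounds: "0 \<le> beta_alg \<mu> U V" "beta_alg \<mu> U V \<le> 1"
proof -
  have ne: "sets PM \<noteq> {}" by auto
  show "beta_alg \<mu> U V \<le> 1" unfolding beta_alg_eq using nu_bound ne by (intro cSUP_least) auto
  have "\<bar>nu {}\<bar> \<le> (SUP W\<in>sets PM. \<bar>nu W\<bar>)" by (rule cSUP_upper[OF _ bdd_nu]) auto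
  then show "0 \<le> beta_alg \<mu> U V" unfolding beta_alg_eq by linarith
qed

lemma L1: "beta_nlj \<mu> n l m j \<le> beta_alg \<mu> (gen_sigma {1..j}) (gen_sigma {j+m..})"
  using Dnl_le_beta Dnl_eq unfolding U_def V_def by simp

lemma L1b: "beta_alg \<mu> (gen_sigma {1..j}) (gen_sigma {j+m..}) \<le> 1"
  using beta_bounds unfolding U_def V_def by simp

lemma L2:
  assumes e: "e > 0"
  shows "\<exists>n0 l0. \<forall>n\<ge>n0. \<forall>l\<ge>l0. beta_alg \<mu> (gen_sigma {1..j}) (gen_sigma {j+m..}) - e < beta_nlj \<mu> n l m j"
proof -
  have ne: "sets PM \<noteq> {}" by auto
  have "beta_alg \<mu> U V - e/2 < (SUP W\<in>sets PM. \<bar>nu W\<bar>)" using e beta_alg_eq by simp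
  then obtain W where W: "W \<in> sets PM" "beta_alg \<mu> U V - e/2 < \<bar>nu W\<bar>"
    using less_cSUP_iff[OF ne bdd_nu] by blast
  obtain W' where W': "W' \<in> Alg" "dd W W' < e/2" using approx_all[OF W(1)] e unfolding approx_def
    by (meson half_gt_zero)
  obtain n0 l0 where s: "sat n0 l0 W'" using W' unfolding Alg_def by blast
  have W's: "W' \<in> sets PM" using W' Alg_sub by blast
  have diff: "\<bar>nu W - nu W'\<bar> \<le> dd W W'" unfolding dd_def by (rule nu_diff[OF W(1) W's])
  show ?thesis
  proof (intro exI allI impI)
    fix n l assume "n \<ge> n0" "l \<ge> l0"
    then have "sat n l W'" using sat_mono s by blast
    then have "\<bar>nu W'\<bar> \<le> Dnl n l" by (rule sat_bound)
    then have "beta_alg \<mu> U V - e < Dnl n l" using W(2) W'(2) diff by linarith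
    then show "beta_alg \<mu> (gen_sigma {1..j}) (gen_sigma {j+m..}) - e < beta_nlj \<mu> n l m j"
      using Dnl_eq unfolding U_def V_def by simp
  qed
qed

end



theorem proposition3:
  fixes \<mu> :: "(nat \<Rightarrow> real) measure" and m :: nat
  assumes "prob_space \<mu>"
    and "sets \<mu> = sets Omega"
    and "stationary \<mu>"
    and "ergodic \<mu>"
    and "m \<ge> 1"
  shows "((\<lambda>(n, l). beta_nl \<mu> n l m) \<longlongrightarrow> beta_mix \<mu> m) (sequentially \<times>\<^sub>F sequentially)"
proof -
  have loc: "bsetup \<mu>" using assms(1,2) by (rule bsetup.intro)
  define Bj where "Bj j = beta_alg \<mu> (gen_sigma {1..j}) (gen_sigma {j+m..})" for j
  define B where "B = (SUP j\<in>{1..}. Bj j)"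
  have BB: "beta_mix \<mu> m = B" unfolding B_def Bj_def beta_mix_def ..
  have bdd: "bdd_above (Bj ` {1..})"
    using bsetup.L1b[OF loc] unfolding Bj_def by (intro bdd_aboveI[of _ 1]) auto
  have upper: "beta_nlj \<mu> n l m j \<le> B" if "j \<ge> 1" for n l j
  proof -
    have "beta_nlj \<mu> n l m j \<le> Bj j" using bsetup.L1[OF loc] unfolding Bj_def by blast
    also have "\<dots> \<le> B" unfolding B_def using that bdd by (intro cSUP_upper) auto
    finally show ?thesis .
  qed
  show ?thesis unfolding BB tendsto_iff
  proof (intro allI impI)
    fix e :: real assume e: "e > 0"
    have ne: "{1::nat..} \<noteq> {}" by auto
    have "B - e/2 < B" using e by simp
    then obtain j where j: "j \<in> {1..}" "B - e/2 < Bj j"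
      using less_cSUP_iff[OF ne bdd] unfolding B_def by blast
    have "\<exists>n0 l0. \<forall>n\<ge>n0. \<forall>l\<ge>l0. Bj j - e/2 < beta_nlj \<mu> n l m j"
      unfolding Bj_def by (rule bsetup.L2[OF loc]) (use e in simp)
    then obtain n0 l0 where nl: "\<And>n l. n \<ge> n0 \<Longrightarrow> l \<ge> l0 \<Longrightarrow> Bj j - e/2 < beta_nlj \<mu> n l m j"
      by blast
    define N where "N = max (max n0 l0) (j + m)"
    show "\<forall>\<^sub>F x in sequentially \<times>\<^sub>F sequentially. dist ((\<lambda>(n, l). beta_nl \<mu> n l m) x) B < e"
      unfolding eventually_prod_sequentially
    proof (intro exI allI impI)
      fix l n assume l: "l \<ge> N" and n: "n \<ge> N"
      have jin: "j \<in> {1..n - m}" using j n by (auto simp: N_def)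
      have fin: "finite ((\<lambda>j. beta_nlj \<mu> n l m j) ` {1..n - m})" by simp
      have ge: "beta_nlj \<mu> n l m j \<le> beta_nl \<mu> n l m"
        unfolding beta_nl_def using fin jin by (intro Max_ge) auto
      have le: "beta_nl \<mu> n l m \<le> B"
        unfolding beta_nl_def using fin jin upper by (intro Max.boundedI) auto
      have "Bj j - e/2 < beta_nlj \<mu> n l m j" using nl n l by (simp add: N_def)
      then show "dist ((\<lambda>(n, l). beta_nl \<mu> n l m) (n, l)) B < e"
        using ge le j(2) by (simp add: dist_real_def)
    qed
  qed
qed



end
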